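(* Let $p_{\pm1}:E\to E_{\pm1}$, $x\mapsto x_{\pm1}$, and $p^-:E\to E_1\oplus E_{-1}=E^-$, $x\mapsto x_1+x_{-1}=\frac12(x-\tau x)$. Then: (i) $p_{\pm1}(C)=\pm C_\pm$ and $p_{\pm1}(C^0)=\pm C^0_\pm\neq\emptyset$; (ii) $p^-(C)=C\cap E^-=C_+\oplus(-C_-)$ and $p^-(C^0)=C^0\cap E^-=C_+^0\oplus(-C_-^0)$; (iii) $C\subseteq C_+\oplus E_0\oplus(-C_-)$.
   Context: $E$ finite-dimensional real vector space; $h\in\mathrm{End}(E)$ diagonalizable with eigenvalues in $\{-1,0,1\}$, $E_j=\ker(h-j\,\mathrm{id})$, $x=x_1+x_0+x_{-1}$; $\tau=e^{\pi ih}$ ($\mathrm{id}$ on $E_0$, $-\mathrm{id}$ on $E_1\oplus E_{-1}$); $C\subseteq E$ pointed generating closed convex cone with $e^{th}C=C$ for all $t$ and $-\tau(C)=C$; $C^0$ interior of $C$; $C_\pm=\pm C\cap E_{\pm1}$ and $C_\pm^0$ their interiors relative to $E_{\pm1}$. *)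

theory Defs
  imports "HOL-Analysis.Analysis"
begin

definition eigsp :: "('a::real_vector \<Rightarrow> 'a) \<Rightarrow> real \<Rightarrow> 'a set" where
  "eigsp h j = {x. h x = j *\<^sub>R x}"

definition diag_h :: "('a::real_vector \<Rightarrow> 'a) \<Rightarrow> bool" where
  "diag_h h \<longleftrightarrow> linear h \<and>
     (\<forall>x. \<exists>a b c. a \<in> eigsp h 1 \<and> b \<in> eigsp h 0 \<and> c \<in> eigsp h (-1) \<and> x = a + b + c)"

definition decomp :: "('a::real_vector \<Rightarrow> 'a) \<Rightarrow> 'a \<Rightarrow> 'a \<times> 'a \<times> 'a" where
  "decomp h x = (THE (a, b, c). a \<in> eigsp h 1 \<and> b \<in> eigsp h 0 \<and> c \<in> eigsp h (-1) \<and> x = a + b + c)"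

definition p1 :: "('a::real_vector \<Rightarrow> 'a) \<Rightarrow> 'a \<Rightarrow> 'a" where
  "p1 h x = fst (decomp h x)"
definition p0 :: "('a::real_vector \<Rightarrow> 'a) \<Rightarrow> 'a \<Rightarrow> 'a" where
  "p0 h x = fst (snd (decomp h x))"
definition pm1 :: "('a::real_vector \<Rightarrow> 'a) \<Rightarrow> 'a \<Rightarrow> 'a" where
  "pm1 h x = snd (snd (decomp h x))"

definition pminus :: "('a::real_vector \<Rightarrow> 'a) \<Rightarrow> 'a \<Rightarrow> 'a" where
  "pminus h x = p1 h x + pm1 h x"

definition Eminus :: "('a::real_vector \<Rightarrow> 'a) \<Rightarrow> 'a set" where
  "Eminus h = {a + c | a c. a \<in> eigsp h 1 \<and> c \<in> eigsp h (-1)}"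

text \<open>tau = e^{pi i h}: identity on E_0, minus identity on E_1 (+) E_{-1}.\<close>
definition tau :: "('a::real_vector \<Rightarrow> 'a) \<Rightarrow> 'a \<Rightarrow> 'a" where
  "tau h x = p0 h x - p1 h x - pm1 h x"

definition expop :: "real \<Rightarrow> ('a::real_normed_vector \<Rightarrow> 'a) \<Rightarrow> 'a \<Rightarrow> 'a" where
  "expop t h x = (\<Sum>n. (t ^ n / fact n) *\<^sub>R (h ^^ n) x)"

definition Cplus :: "('a::real_vector \<Rightarrow> 'a) \<Rightarrow> 'a set \<Rightarrow> 'a set" where
  "Cplus h C = C \<inter> eigsp h 1"
definition Cminus :: "('a::real_vector \<Rightarrow> 'a) \<Rightarrow> 'a set \<Rightarrow> 'a set" where
  "Cminus h C = uminus ` C \<inter> eigsp h (-1)"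

end

theory Submission
  imports Defs
begin


lemma eig_diff: "linear h \<Longrightarrow> a \<in> eigsp h j \<Longrightarrow> b \<in> eigsp h j \<Longrightarrow> a - b \<in> eigsp h j"
  by (simp add: eigsp_def linear_diff scaleR_diff_right)
lemma eig_add: "linear h \<Longrightarrow> a \<in> eigsp h j \<Longrightarrow> b \<in> eigsp h j \<Longrightarrow> a + b \<in> eigsp h j"
  by (simp add: eigsp_def linear_add scaleR_add_right)
lemma eig_scale: "linear h \<Longrightarrow> a \<in> eigsp h j \<Longrightarrow> r *\<^sub>R a \<in> eigsp h j"
  by (simp add: eigsp_def linear_scale)
lemma eig_uminus: "linear h \<Longrightarrow> a \<in> eigsp h j \<Longrightarrow> - a \<in> eigsp h j"
  by (simp add: eigsp_def linear_neg)

locale hdiag = fixes h :: "'a::euclidean_space \<Rightarrow> 'a" assumes diag: "diag_h h"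
begin

lemma lin: "linear h" using diag by (simp add: diag_h_def)

lemma zero_unique:
  assumes "a \<in> eigsp h 1" "b \<in> eigsp h 0" "c \<in> eigsp h (-1)" "a + b + c = 0"
  shows "a = 0 \<and> b = 0 \<and> c = 0"
proof -
  have ha: "h a = a" "h b = 0" "h c = - c" using assms(1-3) by (auto simp: eigsp_def)
  have "h (a + b + c) = a - c" using ha lin by (simp add: linear_add)
  hence 1: "a - c = 0" using assms(4) lin by (simp add: linear_0)
  have "h (a - c) = a + c" using ha lin by (simp add: linear_diff)
  hence 2: "a + c = 0" using 1 lin by (simp add: linear_0)
  have "a = c" using 1 by simp
  hence "2 *\<^sub>R a = 0" using 2 by (simp add: scaleR_2)
  hence "a = 0" by simp
  thus ?thesis using 1 2 assms(4) by auto
qed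

lemma decomp_eq:
  assumes "a \<in> eigsp h 1" "b \<in> eigsp h 0" "c \<in> eigsp h (-1)" "x = a + b + c"
  shows "decomp h x = (a, b, c)"
  unfolding decomp_def
proof (rule the_equality)
  show "case (a, b, c) of (a, b, c) \<Rightarrow> a \<in> eigsp h 1 \<and> b \<in> eigsp h 0 \<and> c \<in> eigsp h (- 1) \<and> x = a + b + c"
    using assms by simp
next
  fix y assume "case y of (a, b, c) \<Rightarrow> a \<in> eigsp h 1 \<and> b \<in> eigsp h 0 \<and> c \<in> eigsp h (- 1) \<and> x = a + b + c"
  then obtain a' b' c' where y: "y = (a',b',c')" "a' \<in> eigsp h 1" "b' \<in> eigsp h 0" "c' \<in> eigsp h (- 1)" "x = a' + b' + c'"
    by (cases y) auto
  have d: "a' - a \<in> eigsp h 1" "b' - b \<in> eigsp h 0" "c' - c \<in> eigsp h (-1)"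
    using y assms by (simp_all add: eig_diff[OF lin])
  have "(a' - a) + (b' - b) + (c' - c) = (a' + b' + c') - (a + b + c)" by (simp add: algebra_simps)
  also have "\<dots> = 0" using y(5) assms(4) by simp
  finally have "a' - a = 0 \<and> b' - b = 0 \<and> c' - c = 0" by (rule zero_unique[OF d])
  thus "y = (a, b, c)" using y by auto
qed

lemma pchar:
  assumes "a \<in> eigsp h 1" "b \<in> eigsp h 0" "c \<in> eigsp h (-1)" "x = a + b + c"
  shows "p1 h x = a" "p0 h x = b" "pm1 h x = c"
  using decomp_eq[OF assms] by (auto simp: p1_def p0_def pm1_def)

lemma pmem: "p1 h x \<in> eigsp h 1" "p0 h x \<in> eigsp h 0" "pm1 h x \<in> eigsp h (-1)"
  and psum: "x = p1 h x + p0 h x + pm1 h x"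
proof -
  obtain a b c where abc: "a \<in> eigsp h 1" "b \<in> eigsp h 0" "c \<in> eigsp h (-1)" "x = a + b + c"
    using diag unfolding diag_h_def by blast
  show "p1 h x \<in> eigsp h 1" "p0 h x \<in> eigsp h 0" "pm1 h x \<in> eigsp h (-1)" "x = p1 h x + p0 h x + pm1 h x"
    using pchar[OF abc] abc by auto
qed

lemma p_add: "p1 h (x + y) = p1 h x + p1 h y" "p0 h (x + y) = p0 h x + p0 h y" "pm1 h (x + y) = pm1 h x + pm1 h y"
proof -
  have "(p1 h x + p0 h x + pm1 h x) + (p1 h y + p0 h y + pm1 h y) = (p1 h x + p1 h y) + (p0 h x + p0 h y) + (pm1 h x + pm1 h y)"
    by (simp add: algebra_simps)
  hence "x + y = (p1 h x + p1 h y) + (p0 h x + p0 h y) + (pm1 h x + pm1 h y)"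
    using psum[symmetric, of x] psum[symmetric, of y] by simp
  note * = pchar[OF eig_add[OF lin pmem(1) pmem(1)] eig_add[OF lin pmem(2) pmem(2)] eig_add[OF lin pmem(3) pmem(3)] this]
  show "p1 h (x + y) = p1 h x + p1 h y" "p0 h (x + y) = p0 h x + p0 h y" "pm1 h (x + y) = pm1 h x + pm1 h y"
    using * by auto
qed

lemma p_scale: "p1 h (r *\<^sub>R x) = r *\<^sub>R p1 h x" "p0 h (r *\<^sub>R x) = r *\<^sub>R p0 h x" "pm1 h (r *\<^sub>R x) = r *\<^sub>R pm1 h x"
proof -
  have "r *\<^sub>R x = r *\<^sub>R p1 h x + r *\<^sub>R p0 h x + r *\<^sub>R pm1 h x"
    using psum[of x] by (metis scaleR_add_right)
  note * = pchar[OF eig_scale[OF lin pmem(1)] eig_scale[OF lin pmem(2)] eig_scale[OF lin pmem(3)] this]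
  show "p1 h (r *\<^sub>R x) = r *\<^sub>R p1 h x" "p0 h (r *\<^sub>R x) = r *\<^sub>R p0 h x" "pm1 h (r *\<^sub>R x) = r *\<^sub>R pm1 h x"
    using * by auto
qed

lemma p_lin: "linear (p1 h)" "linear (p0 h)" "linear (pm1 h)"
  by (auto intro!: linearI simp: p_add p_scale)

lemma p_bl: "bounded_linear (p1 h)" "bounded_linear (p0 h)" "bounded_linear (pm1 h)"
  using p_lin linear_conv_bounded_linear by auto

lemma p_idem: "x \<in> eigsp h 1 \<Longrightarrow> p1 h x = x \<and> p0 h x = 0 \<and> pm1 h x = 0"
  "x \<in> eigsp h (-1) \<Longrightarrow> p1 h x = 0 \<and> p0 h x = 0 \<and> pm1 h x = x"
  "x \<in> eigsp h 0 \<Longrightarrow> p1 h x = 0 \<and> p0 h x = x \<and> pm1 h x = 0"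
proof -
  have z: "0 \<in> eigsp h j" for j using lin by (simp add: eigsp_def linear_0)
  show "x \<in> eigsp h 1 \<Longrightarrow> p1 h x = x \<and> p0 h x = 0 \<and> pm1 h x = 0"
    using pchar[of x 0 0 x] z by auto
  show "x \<in> eigsp h (-1) \<Longrightarrow> p1 h x = 0 \<and> p0 h x = 0 \<and> pm1 h x = x"
    using pchar[of 0 0 x x] z by auto
  show "x \<in> eigsp h 0 \<Longrightarrow> p1 h x = 0 \<and> p0 h x = x \<and> pm1 h x = 0"
    using pchar[of 0 x 0 x] z by auto
qed

lemma funpow_h: "(h ^^ n) x = p1 h x + (if n = 0 then p0 h x else 0) + (-1) ^ n *\<^sub>R pm1 h x"
proof (induction n)
  case 0
  then show ?case using psum[of x] by simp
next
  case (Suc n)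
  have e: "h (p1 h x) = p1 h x" "h (p0 h x) = 0" "h (pm1 h x) = - pm1 h x" using pmem[of x] by (auto simp: eigsp_def)
  have "(h ^^ Suc n) x = h ((h ^^ n) x)" by simp
  also have "\<dots> = p1 h x + (-1) ^ Suc n *\<^sub>R pm1 h x"
    unfolding Suc using e lin by (simp add: linear_add linear_scale linear_0)
  finally show ?case by simp
qed

lemma expop_eq: "expop t h x = exp t *\<^sub>R p1 h x + p0 h x + exp (- t) *\<^sub>R pm1 h x"
proof -
  have s1: "(\<lambda>n. (t ^ n / fact n) *\<^sub>R p1 h x) sums (exp t *\<^sub>R p1 h x)"
    using sums_scaleR_left[OF exp_converges[of t]] by (simp add: divide_inverse mult.commute)
  have s3: "(\<lambda>n. (t ^ n / fact n) *\<^sub>R ((-1) ^ n *\<^sub>R pm1 h x)) sums (exp (-t) *\<^sub>R pm1 h x)"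
    using sums_scaleR_left[OF exp_converges[of "-t"], of "pm1 h x"]
    by (simp add: divide_inverse mult_ac power_minus')
  have s2: "(\<lambda>n. (t ^ n / fact n) *\<^sub>R (if n = 0 then p0 h x else 0)) sums p0 h x"
  proof -
    have "(\<lambda>n. (t ^ n / fact n) *\<^sub>R (if n = 0 then p0 h x else 0)) = (\<lambda>n. if n = 0 then p0 h x else 0)"
      by (rule ext) simp
    thus ?thesis using sums_single[of 0 "\<lambda>n. p0 h x"] by simp
  qed
  have "(\<lambda>n. (t ^ n / fact n) *\<^sub>R (h ^^ n) x) sums (exp t *\<^sub>R p1 h x + p0 h x + exp (- t) *\<^sub>R pm1 h x)"
    unfolding funpow_h scaleR_add_right using sums_add[OF sums_add[OF s1 s2] s3] by simp
  thus ?thesis unfolding expop_def by (rule sums_unique[symmetric])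
qed

lemma tau_eq: "- tau h x = p1 h x + pm1 h x - p0 h x"
  by (simp add: tau_def)

end


lemma io_char: "y \<in> top_of_set S interior_of A \<longleftrightarrow> y \<in> S \<and> (\<exists>e>0. \<forall>z\<in>S. dist y z < e \<longrightarrow> z \<in> A)"
proof
  assume "y \<in> top_of_set S interior_of A"
  then obtain U where U: "open U" "y \<in> S \<inter> U" "S \<inter> U \<subseteq> A"
    unfolding interior_of_def openin_open by blast
  then obtain e where e: "e > 0" "ball y e \<subseteq> U" using open_contains_ball by blast
  have "\<forall>z\<in>S. dist y z < e \<longrightarrow> z \<in> A"
  proof (intro ballI impI)
    fix z assume "z \<in> S" "dist y z < e"
    hence "z \<in> S \<inter> U" using e by auto
    thus "z \<in> A" using U(3) by blast
  qed
  thus "y \<in> S \<and> (\<exists>e>0. \<forall>z\<in>S. dist y z < e \<longrightarrow> z \<in> A)" using U e by blast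
next
  assume "y \<in> S \<and> (\<exists>e>0. \<forall>z\<in>S. dist y z < e \<longrightarrow> z \<in> A)"
  then obtain e where e: "y \<in> S" "e > 0" "\<forall>z\<in>S. dist y z < e \<longrightarrow> z \<in> A" by blast
  show "y \<in> top_of_set S interior_of A"
    unfolding interior_of_def openin_open
    apply (rule CollectI, rule exI[of _ "S \<inter> ball y e"])
    using e by auto
qed

lemma io_uminus:
  fixes S :: "'a::real_normed_vector set"
  assumes "uminus ` S = S"
  shows "top_of_set S interior_of (uminus ` A) = uminus ` (top_of_set S interior_of A)"
proof -
  have S: "x \<in> S \<longleftrightarrow> - x \<in> S" for x using assms by force
  have A: "x \<in> uminus ` A \<longleftrightarrow> - x \<in> A" for x by force
  have "y \<in> top_of_set S interior_of (uminus ` A) \<longleftrightarrow> - y \<in> top_of_set S interior_of A" for y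
  proof -
    have "(\<forall>z\<in>S. dist y z < e \<longrightarrow> - z \<in> A) \<longleftrightarrow> (\<forall>z\<in>S. dist (-y) z < e \<longrightarrow> z \<in> A)" for e
    proof
      assume H: "\<forall>z\<in>S. dist y z < e \<longrightarrow> - z \<in> A"
      show "\<forall>z\<in>S. dist (-y) z < e \<longrightarrow> z \<in> A"
      proof (intro ballI impI)
        fix z assume "z \<in> S" "dist (-y) z < e"
        hence "-z \<in> S" "dist y (-z) < e" using S by (auto simp: dist_norm, metis minus_diff_eq minus_minus norm_minus_commute uminus_add_conv_diff)
        thus "z \<in> A" using H by force
      qed
    next
      assume H: "\<forall>z\<in>S. dist (-y) z < e \<longrightarrow> z \<in> A"
      show "\<forall>z\<in>S. dist y z < e \<longrightarrow> - z \<in> A"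
      proof (intro ballI impI)
        fix z assume "z \<in> S" "dist y z < e"
        hence "-z \<in> S" "dist (-y) (-z) < e" using S by (auto simp: dist_norm, metis minus_diff_eq norm_minus_commute)
        thus "- z \<in> A" using H by force
      qed
    qed
    thus ?thesis unfolding io_char A using S by metis
  qed
  thus ?thesis by force
qed

locale conesetup = hdiag h for h :: "'a::euclidean_space \<Rightarrow> 'a" +
  fixes C :: "'a set"
  assumes closedC: "closed C" and convexC: "convex C" and coneC: "cone C"
    and generating: "\<forall>x. \<exists>a\<in>C. \<exists>b\<in>C. x = a - b"
    and inv_exp: "\<forall>t. expop t h ` C = C"
    and inv_tau: "(\<lambda>x. - tau h x) ` C = C"
begin

lemma zeroC: "0 \<in> C"
proof -
  obtain a b where "a \<in> C" using generating by blast
  thus ?thesis using coneC unfolding cone_def by (metis scaleR_zero_left order_refl)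
qed

lemma scaleC: "x \<in> C \<Longrightarrow> r \<ge> 0 \<Longrightarrow> r *\<^sub>R x \<in> C"
  using coneC unfolding cone_def by blast

lemma addC: "x \<in> C \<Longrightarrow> y \<in> C \<Longrightarrow> x + y \<in> C"
proof -
  assume "x \<in> C" "y \<in> C"
  hence "(1/2) *\<^sub>R x + (1/2) *\<^sub>R y \<in> C" using convexC unfolding convex_def by force
  hence "2 *\<^sub>R ((1/2) *\<^sub>R x + (1/2) *\<^sub>R y) \<in> C" by (rule scaleC) simp
  thus "x + y \<in> C" by (simp add: scaleR_add_right)
qed

lemma expC: "x \<in> C \<Longrightarrow> expop t h x \<in> C"
  using inv_exp by blast

lemma exp_neg_tendsto: "((\<lambda>t::real. exp (- t)) \<longlongrightarrow> 0) at_top"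
  by (rule filterlim_compose[OF exp_at_bot filterlim_uminus_at_bot_at_top])

lemma p1C: "x \<in> C \<Longrightarrow> p1 h x \<in> C"
proof -
  assume x: "x \<in> C"
  let ?f = "\<lambda>t. exp (- t) *\<^sub>R expop t h x"
  have f: "?f t = p1 h x + exp (- t) *\<^sub>R p0 h x + (exp (- t) * exp (- t)) *\<^sub>R pm1 h x" for t
    unfolding expop_eq by (simp add: scaleR_add_right exp_minus field_simps)
  have "(?f \<longlongrightarrow> p1 h x + 0 *\<^sub>R p0 h x + (0 * 0) *\<^sub>R pm1 h x) at_top"
    unfolding f by (intro tendsto_intros exp_neg_tendsto)
  hence t: "(?f \<longlongrightarrow> p1 h x) at_top" by simp
  show ?thesis
  proof (rule Lim_in_closed_set[OF closedC _ _ t])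
    show "eventually (\<lambda>t. ?f t \<in> C) at_top"
      by (rule always_eventually) (auto intro!: scaleC expC x)
  qed simp
qed

lemma pm1C: "x \<in> C \<Longrightarrow> pm1 h x \<in> C"
proof -
  assume x: "x \<in> C"
  let ?f = "\<lambda>t. exp (- t) *\<^sub>R expop (- t) h x"
  have f: "?f t = (exp (- t) * exp (- t)) *\<^sub>R p1 h x + exp (- t) *\<^sub>R p0 h x + pm1 h x" for t
    unfolding expop_eq by (simp add: scaleR_add_right exp_minus field_simps)
  have "(?f \<longlongrightarrow> (0 * 0) *\<^sub>R p1 h x + 0 *\<^sub>R p0 h x + pm1 h x) at_top"
    unfolding f by (intro tendsto_intros exp_neg_tendsto)
  hence t: "(?f \<longlongrightarrow> pm1 h x) at_top" by simp
  show ?thesis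
  proof (rule Lim_in_closed_set[OF closedC _ _ t])
    show "eventually (\<lambda>t. ?f t \<in> C) at_top"
      by (rule always_eventually) (auto intro!: scaleC expC x)
  qed simp
qed

lemma pminusC: "x \<in> C \<Longrightarrow> pminus h x \<in> C"
  unfolding pminus_def by (intro addC p1C pm1C)

lemma interior_nonempty: "interior C \<noteq> {}"
proof -
  have "span C = UNIV"
  proof (rule set_eqI, rule iffI)
    fix x :: 'a
    obtain a b where "a \<in> C" "b \<in> C" "x = a - b" using generating by blast
    thus "x \<in> span C" by (simp add: span_base span_diff)
  qed simp
  moreover have "0 \<in> affine hull C" using zeroC by (simp add: hull_inc)
  ultimately have "affine hull C = UNIV" using affine_hull_span_0 by blast
  hence "rel_interior C = interior C" by (rule rel_interior_interior)
  moreover have "C \<noteq> {}" using zeroC by blast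
  ultimately show ?thesis using rel_interior_eq_empty[OF convexC] by simp
qed

lemma add_interior: "x \<in> C \<Longrightarrow> u \<in> interior C \<Longrightarrow> x + u \<in> interior C"
proof -
  assume x: "x \<in> C" and "u \<in> interior C"
  then obtain r where r: "r > 0" "ball u r \<subseteq> C" using mem_interior by blast
  have "ball (x + u) r \<subseteq> C"
  proof
    fix v assume "v \<in> ball (x + u) r"
    hence "v - x \<in> ball u r" by (simp add: dist_norm algebra_simps)
    hence "v - x \<in> C" using r by blast
    from addC[OF x this] show "v \<in> C" by simp
  qed
  thus ?thesis using r mem_interior by blast
qed

lemma scale_interior: "u \<in> interior C \<Longrightarrow> e > 0 \<Longrightarrow> e *\<^sub>R u \<in> interior C"
proof -
  assume "u \<in> interior C" and e: "e > 0"
  then obtain r where r: "r > 0" "ball u r \<subseteq> C" using mem_interior by blast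
  have "ball (e *\<^sub>R u) (e * r) \<subseteq> C"
  proof
    fix v assume "v \<in> ball (e *\<^sub>R u) (e * r)"
    hence "norm (e *\<^sub>R u - v) < e * r" by (simp add: dist_norm)
    moreover have "e *\<^sub>R u - v = e *\<^sub>R (u - (1/e) *\<^sub>R v)" using e by (simp add: algebra_simps)
    ultimately have "e * norm (u - (1/e) *\<^sub>R v) < e * r" using e by simp
    hence "norm (u - (1/e) *\<^sub>R v) < r" using e by simp
    hence "(1/e) *\<^sub>R v \<in> C" using r by (auto simp: dist_norm)
    hence "e *\<^sub>R ((1/e) *\<^sub>R v) \<in> C" using e by (rule_tac scaleC) auto
    thus "v \<in> C" using e by simp
  qed
  moreover have "e * r > 0" using r e by simp
  ultimately show ?thesis unfolding mem_interior by blast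
qed

definition f :: "'a \<Rightarrow> 'a" where "f x = p1 h x + pm1 h x - p0 h x"

lemma f_inv: "f (f x) = x"
proof -
  have "f x = p1 h x + (- p0 h x) + pm1 h x" by (simp add: f_def)
  note * = pchar[OF pmem(1) eig_uminus[OF lin pmem(2)] pmem(3) this]
  show ?thesis unfolding f_def[of "f x"] * using psum[symmetric, of x] by (simp add: algebra_simps)
qed

lemma f_C: "x \<in> C \<Longrightarrow> f x \<in> C" "f ` C = C"
  using inv_tau by (auto simp: f_def tau_eq[symmetric])

lemma f_bl: "bounded_linear f"
  unfolding f_def using p_bl by (intro bounded_linear_add bounded_linear_sub) auto

lemma f_interior: "u \<in> interior C \<Longrightarrow> f u \<in> interior C"
proof -
  assume u: "u \<in> interior C"
  have "open (f -` interior C)"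
    by (rule continuous_open_vimage) (auto intro: linear_continuous_at f_bl)
  moreover have "f -` interior C \<subseteq> C"
  proof
    fix x assume "x \<in> f -` interior C"
    hence "f x \<in> C" using interior_subset by blast
    hence "f (f x) \<in> C" by (rule f_C)
    thus "x \<in> C" by (simp add: f_inv)
  qed
  ultimately have "f -` interior C \<subseteq> interior C" by (metis interior_maximal)
  moreover have "f u \<in> f -` interior C" using u by (simp add: f_inv)
  ultimately show ?thesis by blast
qed

lemma pminus_interior: "u \<in> interior C \<Longrightarrow> pminus h u \<in> interior C"
proof -
  assume u: "u \<in> interior C"
  have "u + f u = (p1 h u + p0 h u + pm1 h u) + f u" by (simp only: psum[symmetric])
  also have "\<dots> = 2 *\<^sub>R pminus h u" unfolding f_def pminus_def by (simp add: algebra_simps scaleR_2)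
  finally have "pminus h u = (1/2) *\<^sub>R (u + f u)" by simp
  hence "pminus h u = (1/2) *\<^sub>R u + (1/2) *\<^sub>R f u" by (simp add: scaleR_add_right)
  moreover have "(1/2) *\<^sub>R u + (1/2) *\<^sub>R f u \<in> interior C"
    by (rule convexD[OF convex_interior[OF convexC] u f_interior[OF u]]) auto
  ultimately show ?thesis by simp
qed

lemma proj_gen:
  assumes P: "linear P" "\<And>x. x \<in> C \<Longrightarrow> P x \<in> C" "\<And>x. x \<in> S \<Longrightarrow> P x = x" "\<And>x. P x \<in> S"
    and S: "subspace S"
  shows "P ` C = C \<inter> S" "P ` interior C = top_of_set S interior_of (C \<inter> S)"
proof -
  show "P ` C = C \<inter> S"
    using P by force
  show "P ` interior C = top_of_set S interior_of (C \<inter> S)"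
  proof (rule set_eqI, rule iffI)
    fix y assume "y \<in> P ` interior C"
    then obtain u where u: "u \<in> interior C" "y = P u" by blast
    then obtain r where r: "r > 0" "ball u r \<subseteq> C" using mem_interior by blast
    have "\<forall>z\<in>S. dist y z < r \<longrightarrow> z \<in> C \<inter> S"
    proof (intro ballI impI)
      fix z assume z: "z \<in> S" "dist y z < r"
      have "u + (z - y) \<in> ball u r" using z by (simp add: dist_norm norm_minus_commute)
      hence "P (u + (z - y)) \<in> C" using r P by blast
      moreover have "P (u + (z - y)) = z"
        using P z u linear_add[OF P(1)] linear_diff[OF P(1)] by simp
      ultimately show "z \<in> C \<inter> S" using z by simp
    qed
    moreover have "y \<in> S" using u P by simp
    ultimately show "y \<in> top_of_set S interior_of (C \<inter> S)" unfolding io_char using r by blast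
  next
    fix y assume "y \<in> top_of_set S interior_of (C \<inter> S)"
    then obtain e where y: "y \<in> S" "e > 0" "\<forall>z\<in>S. dist y z < e \<longrightarrow> z \<in> C \<inter> S"
      unfolding io_char by blast
    obtain c where c: "c \<in> interior C" using interior_nonempty by blast
    define q where "q = P c"
    define \<epsilon> where "\<epsilon> = e / (2 * (norm q + 1))"
    have pos: "2 * (norm q + 1) > 0" by (smt (verit) norm_ge_zero)
    hence eps: "\<epsilon> > 0" using y unfolding \<epsilon>_def by simp
    have "\<epsilon> * norm q < e"
    proof -
      have "\<epsilon> * norm q \<le> \<epsilon> * (norm q + 1)" using eps by simp
      also have "\<dots> = e / 2" unfolding \<epsilon>_def using pos by (simp add: field_simps)
      finally show ?thesis using y by simp
    qed
    hence "dist y (y - \<epsilon> *\<^sub>R q) < e" using eps by (simp add: dist_norm)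
    moreover have zS: "y - \<epsilon> *\<^sub>R q \<in> S" using S y P unfolding q_def
      by (simp add: subspace_diff subspace_scale)
    ultimately have zC: "y - \<epsilon> *\<^sub>R q \<in> C" using y by blast
    have "(y - \<epsilon> *\<^sub>R q) + \<epsilon> *\<^sub>R c \<in> interior C"
      by (rule add_interior[OF zC scale_interior[OF c eps]])
    moreover have "P ((y - \<epsilon> *\<^sub>R q) + \<epsilon> *\<^sub>R c) = y"
      using P zS y unfolding q_def by (simp add: linear_add linear_scale)
    ultimately show "y \<in> P ` interior C" by (metis image_eqI)
  qed
qed


lemma eig_subspace: "subspace (eigsp h j)"
  unfolding subspace_def using lin eig_add eig_scale by (auto simp: eigsp_def linear_0)

lemma Em_char: "x \<in> Eminus h \<longleftrightarrow> p0 h x = 0"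
proof
  have z: "0 \<in> eigsp h 0" using eig_subspace subspace_0 by blast
  assume "x \<in> Eminus h"
  then obtain a c where "a \<in> eigsp h 1" "c \<in> eigsp h (-1)" "x = a + 0 + c" unfolding Eminus_def by auto
  thus "p0 h x = 0" using pchar z by blast
next
  assume "p0 h x = 0"
  hence "x = p1 h x + pm1 h x" using psum[of x] by simp
  thus "x \<in> Eminus h" unfolding Eminus_def using pmem by blast
qed

lemma Em_split: "x \<in> Eminus h \<Longrightarrow> x = p1 h x + pm1 h x"
proof -
  assume "x \<in> Eminus h"
  hence "p0 h x = 0" by (simp add: Em_char)
  thus ?thesis using psum[of x] by (metis add.right_neutral)
qed

lemma Em_fix: "x \<in> Eminus h \<Longrightarrow> pminus h x = x"
  unfolding pminus_def using Em_split by metis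

lemma main:
  shows
    "(p1 h ` C = Cplus h C \<and> pm1 h ` C = uminus ` Cminus h C
     \<and> p1 h ` interior C = (top_of_set (eigsp h 1)) interior_of (Cplus h C)
     \<and> pm1 h ` interior C = uminus ` ((top_of_set (eigsp h (-1))) interior_of (Cminus h C))
     \<and> (top_of_set (eigsp h 1)) interior_of (Cplus h C) \<noteq> {}
     \<and> (top_of_set (eigsp h (-1))) interior_of (Cminus h C) \<noteq> {})
    \<and> (pminus h ` C = C \<inter> Eminus h
     \<and> C \<inter> Eminus h = {a + b | a b. a \<in> Cplus h C \<and> b \<in> uminus ` Cminus h C}
     \<and> pminus h ` interior C = interior C \<inter> Eminus h
     \<and> interior C \<inter> Eminus h =
         {a + b | a b. a \<in> (top_of_set (eigsp h 1)) interior_of (Cplus h C)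
                   \<and> b \<in> uminus ` ((top_of_set (eigsp h (-1))) interior_of (Cminus h C))})
    \<and> C \<subseteq> {a + b + c | a b c. a \<in> Cplus h C \<and> b \<in> eigsp h 0 \<and> c \<in> uminus ` Cminus h C}"
proof -
  define D2 where "D2 = C \<inter> eigsp h (-1)"
  have symm: "uminus ` eigsp h (-1) = eigsp h (-1)"
    using eig_uminus[OF lin] by (force simp: image_iff)
  have mem: "x \<in> uminus ` A \<longleftrightarrow> - x \<in> A" for x :: 'a and A by force
  have memE: "x \<in> eigsp h (-1) \<longleftrightarrow> - x \<in> eigsp h (-1)" for x
    using eig_uminus[OF lin] by force
  have CmD: "Cminus h C = uminus ` D2" unfolding Cminus_def D2_def
    by (rule set_eqI) (simp only: mem Int_iff memE[symmetric])
  have uCm: "uminus ` Cminus h C = D2" unfolding CmD by (simp add: image_image)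
  have uI: "uminus ` (top_of_set (eigsp h (-1)) interior_of (Cminus h C)) = top_of_set (eigsp h (-1)) interior_of D2"
    using io_uminus[OF symm, of "Cminus h C"] uCm by simp
  have g1: "p1 h ` C = Cplus h C" "p1 h ` interior C = (top_of_set (eigsp h 1)) interior_of (Cplus h C)"
    unfolding Cplus_def
    using proj_gen[OF p_lin(1) p1C _ pmem(1) eig_subspace] p_idem(1) by auto
  have g2: "pm1 h ` C = D2" "pm1 h ` interior C = top_of_set (eigsp h (-1)) interior_of D2"
    unfolding D2_def
    using proj_gen[OF p_lin(3) pm1C _ pmem(3) eig_subspace] p_idem(2) by auto
  have ne: "p1 h ` interior C \<noteq> {}" "pm1 h ` interior C \<noteq> {}" using interior_nonempty by auto
  have i: "(p1 h ` C = Cplus h C \<and> pm1 h ` C = uminus ` Cminus h C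
     \<and> p1 h ` interior C = (top_of_set (eigsp h 1)) interior_of (Cplus h C)
     \<and> pm1 h ` interior C = uminus ` ((top_of_set (eigsp h (-1))) interior_of (Cminus h C))
     \<and> (top_of_set (eigsp h 1)) interior_of (Cplus h C) \<noteq> {}
     \<and> (top_of_set (eigsp h (-1))) interior_of (Cminus h C) \<noteq> {})"
  proof (intro conjI)
    show "pm1 h ` C = uminus ` Cminus h C" unfolding uCm by (rule g2(1))
    show "pm1 h ` interior C = uminus ` ((top_of_set (eigsp h (-1))) interior_of (Cminus h C))"
      unfolding uI by (rule g2(2))
    show "(top_of_set (eigsp h 1)) interior_of (Cplus h C) \<noteq> {}" using ne(1) unfolding g1(2) .
    have "uminus ` ((top_of_set (eigsp h (-1))) interior_of (Cminus h C)) \<noteq> {}"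
      using ne(2) unfolding g2(2) uI[symmetric] .
    thus "(top_of_set (eigsp h (-1))) interior_of (Cminus h C) \<noteq> {}" by simp
  qed (rule g1(1), rule g1(2))
  have ii1: "pminus h ` C = C \<inter> Eminus h"
  proof (rule set_eqI, rule iffI)
    fix y assume "y \<in> pminus h ` C"
    then obtain x where x: "x \<in> C" "y = pminus h x" by blast
    have "p0 h y = 0" using x p_idem pmem unfolding pminus_def by (simp add: p_add)
    thus "y \<in> C \<inter> Eminus h" using x pminusC Em_char by blast
  next
    fix y assume "y \<in> C \<inter> Eminus h"
    hence "y \<in> C" "pminus h y = y" using Em_fix by auto
    thus "y \<in> pminus h ` C" by (metis image_eqI)
  qed
  have ii2: "C \<inter> Eminus h = {a + b | a b. a \<in> Cplus h C \<and> b \<in> uminus ` Cminus h C}"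
  proof (rule set_eqI, rule iffI)
    fix y assume y: "y \<in> C \<inter> Eminus h"
    hence "y = p1 h y + pm1 h y" using Em_split by blast
    moreover have "p1 h y \<in> Cplus h C" using y p1C pmem by (auto simp: Cplus_def)
    moreover have "pm1 h y \<in> uminus ` Cminus h C" using y pm1C pmem by (auto simp: uCm D2_def)
    ultimately show "y \<in> {a + b | a b. a \<in> Cplus h C \<and> b \<in> uminus ` Cminus h C}"
      by (intro CollectI exI[of _ "p1 h y"] exI[of _ "pm1 h y"] conjI)
  next
    fix y assume "y \<in> {a + b | a b. a \<in> Cplus h C \<and> b \<in> uminus ` Cminus h C}"
    then obtain a b where ab: "y = a + b" "a \<in> C" "a \<in> eigsp h 1" "b \<in> C" "b \<in> eigsp h (-1)"
      unfolding uCm by (auto simp: Cplus_def D2_def)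
    thus "y \<in> C \<inter> Eminus h" using addC unfolding Eminus_def by blast
  qed
  have ii3: "pminus h ` interior C = interior C \<inter> Eminus h"
  proof (rule set_eqI, rule iffI)
    fix y assume "y \<in> pminus h ` interior C"
    then obtain x where x: "x \<in> interior C" "y = pminus h x" by blast
    have "p0 h y = 0" using x p_idem pmem unfolding pminus_def by (simp add: p_add)
    thus "y \<in> interior C \<inter> Eminus h" using x pminus_interior Em_char by blast
  next
    fix y assume "y \<in> interior C \<inter> Eminus h"
    hence "y \<in> interior C" "pminus h y = y" using Em_fix by auto
    thus "y \<in> pminus h ` interior C" by (metis image_eqI)
  qed
  have ii4: "interior C \<inter> Eminus h =
         {a + b | a b. a \<in> (top_of_set (eigsp h 1)) interior_of (Cplus h C)
                   \<and> b \<in> uminus ` ((top_of_set (eigsp h (-1))) interior_of (Cminus h C))}"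
  proof (rule set_eqI, rule iffI)
    fix y assume y: "y \<in> interior C \<inter> Eminus h"
    hence "y = p1 h y + pm1 h y" using Em_split by blast
    moreover have "p1 h y \<in> (top_of_set (eigsp h 1)) interior_of (Cplus h C)"
      using y g1(2)[symmetric] by blast
    moreover have "pm1 h y \<in> uminus ` ((top_of_set (eigsp h (-1))) interior_of (Cminus h C))"
      unfolding uI using y g2(2)[symmetric] by blast
    ultimately show "y \<in> {a + b | a b. a \<in> (top_of_set (eigsp h 1)) interior_of (Cplus h C)
                   \<and> b \<in> uminus ` ((top_of_set (eigsp h (-1))) interior_of (Cminus h C))}"
      by (intro CollectI exI[of _ "p1 h y"] exI[of _ "pm1 h y"] conjI)
  next
    fix y assume "y \<in> {a + b | a b. a \<in> (top_of_set (eigsp h 1)) interior_of (Cplus h C)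
                   \<and> b \<in> uminus ` ((top_of_set (eigsp h (-1))) interior_of (Cminus h C))}"
    then obtain a b where ab: "y = a + b" "a \<in> (top_of_set (eigsp h 1)) interior_of (Cplus h C)"
       "b \<in> top_of_set (eigsp h (-1)) interior_of D2" unfolding uI by blast
    obtain e1 where e1: "a \<in> eigsp h 1" "e1 > 0" "\<forall>z\<in>eigsp h 1. dist a z < e1 \<longrightarrow> z \<in> Cplus h C"
      using ab(2) unfolding io_char by blast
    obtain e2 where e2: "b \<in> eigsp h (-1)" "e2 > 0" "\<forall>z\<in>eigsp h (-1). dist b z < e2 \<longrightarrow> z \<in> D2"
      using ab(3) unfolding io_char by blast
    obtain c where c: "c \<in> interior C" using interior_nonempty by blast
    define q1 where "q1 = p1 h c"
    define q2 where "q2 = pm1 h c"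
    define \<epsilon> where "\<epsilon> = min (e1 / (2 * (norm q1 + 1))) (e2 / (2 * (norm q2 + 1)))"
    have pos: "2 * (norm q1 + 1) > 0" "2 * (norm q2 + 1) > 0" by (smt (verit) norm_ge_zero)+
    hence eps: "\<epsilon> > 0" using e1 e2 unfolding \<epsilon>_def by simp
    have "\<epsilon> * norm q1 < e1"
    proof -
      have "\<epsilon> * norm q1 \<le> \<epsilon> * (norm q1 + 1)" using eps by simp
      also have "\<dots> \<le> (e1 / (2 * (norm q1 + 1))) * (norm q1 + 1)"
        by (rule mult_right_mono) (auto simp: \<epsilon>_def)
      also have "\<dots> = e1 / 2" using pos by (simp add: field_simps)
      finally show ?thesis using e1 by simp
    qed
    hence "dist a (a - \<epsilon> *\<^sub>R q1) < e1" using eps by (simp add: dist_norm)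
    moreover have "a - \<epsilon> *\<^sub>R q1 \<in> eigsp h 1" unfolding q1_def
      using e1(1) eig_diff[OF lin] eig_scale[OF lin] pmem by blast
    ultimately have z1: "a - \<epsilon> *\<^sub>R q1 \<in> C" using e1 by (auto simp: Cplus_def)
    have "\<epsilon> * norm q2 < e2"
    proof -
      have "\<epsilon> * norm q2 \<le> \<epsilon> * (norm q2 + 1)" using eps by simp
      also have "\<dots> \<le> (e2 / (2 * (norm q2 + 1))) * (norm q2 + 1)"
        by (rule mult_right_mono) (auto simp: \<epsilon>_def)
      also have "\<dots> = e2 / 2" using pos by (simp add: field_simps)
      finally show ?thesis using e2 by simp
    qed
    hence "dist b (b - \<epsilon> *\<^sub>R q2) < e2" using eps by (simp add: dist_norm)
    moreover have "b - \<epsilon> *\<^sub>R q2 \<in> eigsp h (-1)" unfolding q2_def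
      using e2(1) eig_diff[OF lin] eig_scale[OF lin] pmem by blast
    ultimately have z2: "b - \<epsilon> *\<^sub>R q2 \<in> C" using e2 by (auto simp: D2_def)
    have "(a - \<epsilon> *\<^sub>R q1) + (b - \<epsilon> *\<^sub>R q2) + \<epsilon> *\<^sub>R pminus h c \<in> interior C"
      by (rule add_interior[OF addC[OF z1 z2] scale_interior[OF pminus_interior[OF c] eps]])
    moreover have "(a - \<epsilon> *\<^sub>R q1) + (b - \<epsilon> *\<^sub>R q2) + \<epsilon> *\<^sub>R pminus h c = y"
      unfolding ab(1) q1_def q2_def pminus_def by (simp add: algebra_simps)
    moreover have "y \<in> Eminus h" using ab(1) e1(1) e2(1) unfolding Eminus_def by blast
    ultimately show "y \<in> interior C \<inter> Eminus h" by simp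
  qed
  have iii: "C \<subseteq> {a + b + c | a b c. a \<in> Cplus h C \<and> b \<in> eigsp h 0 \<and> c \<in> uminus ` Cminus h C}"
  proof
    fix y assume y: "y \<in> C"
    have "p1 h y \<in> Cplus h C" using y p1C pmem by (auto simp: Cplus_def)
    moreover have "pm1 h y \<in> uminus ` Cminus h C" using y pm1C pmem by (auto simp: uCm D2_def)
    ultimately show "y \<in> {a + b + c | a b c. a \<in> Cplus h C \<and> b \<in> eigsp h 0 \<and> c \<in> uminus ` Cminus h C}"
      using pmem(2)[of y] by (intro CollectI exI[of _ "p1 h y"] exI[of _ "p0 h y"] exI[of _ "pm1 h y"] conjI psum)
  qed
  show ?thesis by (rule conjI[OF i conjI[OF conjI[OF ii1 conjI[OF ii2 conjI[OF ii3 ii4]]] iii]])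
qed

end
theorem lemma3p2:
  fixes h :: "'a::euclidean_space \<Rightarrow> 'a" and C :: "'a set"
  assumes diag: "diag_h h"
    and closedC: "closed C" and convexC: "convex C" and coneC: "cone C"
    and pointed: "C \<inter> uminus ` C = {0}"
    and generating: "\<forall>x. \<exists>a\<in>C. \<exists>b\<in>C. x = a - b"
    and inv_exp: "\<forall>t. expop t h ` C = C"
    and inv_tau: "(\<lambda>x. - tau h x) ` C = C"
  shows
    "(p1 h ` C = Cplus h C \<and> pm1 h ` C = uminus ` Cminus h C
     \<and> p1 h ` interior C = (top_of_set (eigsp h 1)) interior_of (Cplus h C)
     \<and> pm1 h ` interior C = uminus ` ((top_of_set (eigsp h (-1))) interior_of (Cminus h C))
     \<and> (top_of_set (eigsp h 1)) interior_of (Cplus h C) \<noteq> {}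
     \<and> (top_of_set (eigsp h (-1))) interior_of (Cminus h C) \<noteq> {})
    \<and> (pminus h ` C = C \<inter> Eminus h
     \<and> C \<inter> Eminus h = {a + b | a b. a \<in> Cplus h C \<and> b \<in> uminus ` Cminus h C}
     \<and> pminus h ` interior C = interior C \<inter> Eminus h
     \<and> interior C \<inter> Eminus h =
         {a + b | a b. a \<in> (top_of_set (eigsp h 1)) interior_of (Cplus h C)
                   \<and> b \<in> uminus ` ((top_of_set (eigsp h (-1))) interior_of (Cminus h C))})
    \<and> C \<subseteq> {a + b + c | a b c. a \<in> Cplus h C \<and> b \<in> eigsp h 0 \<and> c \<in> uminus ` Cminus h C}"
  proof -
  interpret conesetup h C
    by unfold_locales (use assms in auto)
  show ?thesis by (rule main)
qed

end
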